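(* Let $\mu>0$, $T_s>0$, $T_w>0$, let $Q_w\ge 1$ be an integer, and for $\rho\in(0,1)$ define $$f(\rho)=\frac{\Gamma(Q_w+1,\mu\rho T_s)-\mu\rho T_s\,\Gamma(Q_w,\mu\rho T_s)}{\mu\rho\,\Gamma(Q_w)},$$ and $b=T_s+T_w$, where $\Gamma(\cdot)$ is the Gamma function and $\Gamma(s,x)=\int_x^\infty u^{s-1}e^{-u}\,du$ is the upper incomplete Gamma function. Then $f''(\rho)\bigl(f(\rho)+b\bigr)\ge 2\bigl(f'(\rho)\bigr)^2$ for all $\rho\in(0,1)$; consequently, for any $\sigma_{\mathrm{off}}\in[0,1)$, the function $E(\rho)=1-(1-\sigma_{\mathrm{off}})(1-\rho)\dfrac{f(\rho)}{f(\rho)+T_s+T_w}$ is concave on $(0,1)$.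
   Context: This $f$ is the exact mean low-power time of an Energy Efficient Ethernet link under the "burst transmission" policy in the high-load regime with Poisson arrivals at normalized load $\rho$, where $\mu^{-1}$ is the mean packet transmission time, $T_s,T_w$ are the sleep and wake transition times, $Q_w$ is the burst size threshold, and $\sigma_{\mathrm{off}}$ is the relative power in the idle state; $E(\rho)$ is the normalized link energy consumption. *)

theory Defs
  imports "HOL-Analysis.Analysis"
begin

definition upper_Gamma :: "real \<Rightarrow> real \<Rightarrow> real" where
  "upper_Gamma s x = integral {x..} (\<lambda>u. u powr (s - 1) * exp (- u))"

definition eee_f :: "real \<Rightarrow> real \<Rightarrow> nat \<Rightarrow> real \<Rightarrow> real" where
  "eee_f \<mu> Ts Qw \<rho> =
     (upper_Gamma (real Qw + 1) (\<mu> * \<rho> * Ts)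
        - \<mu> * \<rho> * Ts * upper_Gamma (real Qw) (\<mu> * \<rho> * Ts))
     / (\<mu> * \<rho> * Gamma (real Qw))"

definition eee_E :: "real \<Rightarrow> real \<Rightarrow> real \<Rightarrow> nat \<Rightarrow> real \<Rightarrow> real \<Rightarrow> real" where
  "eee_E \<mu> Ts Tw Qw \<sigma> \<rho> =
     1 - (1 - \<sigma>) * (1 - \<rho>) * (eee_f \<mu> Ts Qw \<rho> / (eee_f \<mu> Ts Qw \<rho> + Ts + Tw))"

end

theory Submission
  imports Defs
begin


definition Tsum :: "nat \<Rightarrow> real \<Rightarrow> real" where
  "Tsum n x = (\<Sum>k<n. x^k / fact k)"

lemma Tsum_Suc: "Tsum (Suc n) x = Tsum n x + x^n / fact n"
  by (simp add: Tsum_def)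

lemma Tsum_0[simp]: "Tsum 0 x = 0" by (simp add: Tsum_def)

lemma DERIV_Tsum: "DERIV (Tsum (Suc n)) x :> Tsum n x"
proof (induction n)
  case 0
  then show ?case by (simp add: Tsum_def)
next
  case (Suc n)
  have e: "Tsum (Suc (Suc n)) = (\<lambda>x. Tsum (Suc n) x + x^(Suc n) / fact (Suc n))"
    by (simp add: Tsum_Suc fun_eq_iff)
  have "DERIV (\<lambda>x. Tsum (Suc n) x + x^(Suc n) / fact (Suc n)) x :>
          Tsum n x + real (Suc n) * x^n / fact (Suc n)"
    by (rule derivative_eq_intros Suc refl | simp)+
  moreover have "real (Suc n) * x^n / fact (Suc n) = x^n / fact n"
    by (simp add: field_simps del: of_nat_Suc)
  ultimately show ?case by (simp add: e Tsum_Suc)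
qed

lemma Tsum_nonneg: "x \<ge> 0 \<Longrightarrow> Tsum n x \<ge> 0"
  unfolding Tsum_def by (intro sum_nonneg) auto

lemma Tsum_le_exp: assumes "x \<ge> 0" shows "Tsum n x \<le> exp x"
proof -
  have "Tsum n x = (\<Sum>k<n. x^k /\<^sub>R fact k)" by (simp add: Tsum_def field_simps)
  also have "\<dots> \<le> (\<Sum>k. x^k /\<^sub>R fact k)"
    by (rule sum_le_suminf) (use exp_converges[of x] assms in \<open>auto simp: sums_iff\<close>)
  also have "\<dots> = exp x" using exp_converges[of x] by (simp add: sums_iff)
  finally show ?thesis .
qed

lemma upper_Gamma_nat:
  fixes x :: real assumes x: "x > 0"
  shows "upper_Gamma (real (Suc m)) x = fact m * exp (-x) * Tsum (Suc m) x"
proof -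
  define F where "F u = - fact m * exp (-u) * Tsum (Suc m) u" for u :: real
  define g where "g u = u^m * exp (-u)" for u :: real
  have dF: "DERIV F u :> g u" for u
    unfolding F_def g_def
    by (rule derivative_eq_intros DERIV_Tsum refl | simp)+ (simp add: Tsum_Suc algebra_simps)
  have Flim: "(F \<longlongrightarrow> 0) at_top"
  proof -
    have "F = (\<lambda>u. - fact m * (\<Sum>k<Suc m. u^k / exp u / fact k))"
      by (auto simp: F_def Tsum_def fun_eq_iff sum_distrib_left exp_minus field_simps)
    moreover have "((\<lambda>u::real. u^k / exp u / fact k) \<longlongrightarrow> 0) at_top" for k :: nat
      by (rule tendsto_divide_zero[OF tendsto_power_div_exp_0])
    then have "((\<lambda>u::real. (\<Sum>k<Suc m. u^k / exp u / fact k)) \<longlongrightarrow> (\<Sum>k<Suc m. 0)) at_top"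
      by (intro tendsto_sum)
    then have "((\<lambda>u::real. - fact m * (\<Sum>k<Suc m. u^k / exp u / fact k)) \<longlongrightarrow> - fact m * 0) at_top"
      by (intro tendsto_mult tendsto_const) simp
    ultimately show ?thesis by simp
  qed
  have A: "((F \<circ> real_of_ereal) \<longlongrightarrow> F x) (at_right (ereal x))"
    unfolding ereal_tendsto_simps
    using DERIV_isCont[OF dF, of x] by (simp add: continuous_within isCont_def tendsto_within_subset filterlim_at_split)
  have B: "((F \<circ> real_of_ereal) \<longlongrightarrow> 0) (at_left \<infinity>)"
    unfolding ereal_tendsto_simps by (rule Flim)
  have I: "set_integrable lborel (einterval (ereal x) \<infinity>) g"
       "(LBINT u=ereal x..\<infinity>. g u) = 0 - F x"
    by (rule interval_integral_FTC_nonneg[OF _ dF _ _ A B];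
        use x in \<open>auto simp: g_def intro!: continuous_intros\<close>)+
  have "integral {x<..} g = 0 - F x"
    using I set_borel_integral_eq_integral(2)[OF I(1)]
    by (simp add: interval_lebesgue_integral_def)
  moreover have "integral {x..} (\<lambda>u. u powr (real (Suc m) - 1) * exp (- u)) = integral {x<..} g"
  proof -
    have "integral {x..} (\<lambda>u. u powr (real (Suc m) - 1) * exp (- u)) = integral {x..} g"
      by (rule integral_cong) (use x in \<open>auto simp: g_def powr_realpow\<close>)
    also have "\<dots> = integral {x<..} g"
      by (rule integral_spike_set) (auto intro: negligible_subset[OF negligible_sing])
    finally show ?thesis .
  qed
  ultimately show ?thesis by (simp add: upper_Gamma_def F_def)
qed



lemma aux1: "0 - c*((0-1)*A + B*(1-x)) = -c*(-A + (1-x)*B)" for c A B x :: real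
  by algebra

lemma aux2: "H \<noteq> 0 \<Longrightarrow> (b * F2 * H^2 - b * F1 * (of_nat 2 * ((F1 + 0) * H^(2 - Suc 0)))) / (H^2 * H^2)
         = b * (F2 * H - 2 * F1^2) / H^3" for H b F1 F2 :: real
  by (simp add: field_simps power2_eq_square power3_eq_cube)

lemma concave_aux:
  fixes F F1 F2 :: "real \<Rightarrow> real" and b \<sigma> :: real
  assumes b: "b > 0" and s: "\<sigma> < 1"
    and d1: "\<And>x. x \<in> {0<..<1} \<Longrightarrow> DERIV F x :> F1 x"
    and d2: "\<And>x. x \<in> {0<..<1} \<Longrightarrow> DERIV F1 x :> F2 x"
    and nn: "\<And>x. x \<in> {0<..<1} \<Longrightarrow> F x \<ge> 0"
    and dec: "\<And>x. x \<in> {0<..<1} \<Longrightarrow> F1 x \<le> 0"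
    and key: "\<And>x. x \<in> {0<..<1} \<Longrightarrow> F2 x * (F x + b) \<ge> 2 * (F1 x)^2"
  shows "concave_on {0<..<1} (\<lambda>x. 1 - (1 - \<sigma>) * (1 - x) * (F x / (F x + b)))"
proof (rule f''_le0_imp_concave)
  define g1 where "g1 x = - (F x / (F x + b)) + (1 - x) * (b * F1 x / (F x + b)^2)" for x
  define g2 where "g2 x = - 2 * (b * F1 x / (F x + b)^2)
     + (1 - x) * (b * (F2 x * (F x + b) - 2 * (F1 x)^2) / (F x + b)^3)" for x
  show "convex {0<..<(1::real)}" by simp
  show "DERIV (\<lambda>x. 1 - (1 - \<sigma>) * (1 - x) * (F x / (F x + b))) x :> - (1 - \<sigma>) * g1 x"
    if x: "x \<in> {0<..<1}" for x
  proof -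
    have H: "F x + b \<noteq> 0" using nn[OF x] b by linarith
    have q: "DERIV (\<lambda>x. F x / (F x + b)) x :> (F1 x * (F x + b) - F x * (F1 x + 0)) / (F x + b)^2"
      using DERIV_divide[OF d1[OF x] DERIV_add[OF d1[OF x] DERIV_const[of b]] H]
      by (simp add: power2_eq_square)
    have q': "DERIV (\<lambda>x. F x / (F x + b)) x :> b * F1 x / (F x + b)^2"
      using q by (simp add: algebra_simps)
    have dd: "DERIV (\<lambda>x. 1 - (1 - \<sigma>) * ((1 - x) * (F x / (F x + b)))) x :>
           0 - (1 - \<sigma>) * ((0 - 1) * (F x / (F x + b)) + (b * F1 x / (F x + b)^2) * (1 - x))"
      by (intro DERIV_diff DERIV_cmult DERIV_mult q' DERIV_const DERIV_ident)
    have eq: "(\<lambda>x. 1 - (1 - \<sigma>) * (1 - x) * (F x / (F x + b))) = (\<lambda>x. 1 - (1 - \<sigma>) * ((1 - x) * (F x / (F x + b))))"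
      by (simp add: mult.assoc)
    have val: "0 - (1 - \<sigma>) * ((0 - 1) * (F x / (F x + b)) + (b * F1 x / (F x + b)^2) * (1 - x)) = - (1 - \<sigma>) * g1 x"
      unfolding g1_def by (rule aux1)
    show ?thesis unfolding eq using DERIV_cong[OF dd val] .
  qed
  show "DERIV (\<lambda>x. - (1 - \<sigma>) * g1 x) x :> - (1 - \<sigma>) * g2 x"
    if x: "x \<in> {0<..<1}" for x
  proof -
    have H: "F x + b \<noteq> 0" using nn[OF x] b by linarith
    have q: "DERIV (\<lambda>x. F x / (F x + b)) x :> (F1 x * (F x + b) - F x * (F1 x + 0)) / (F x + b)^2"
      using DERIV_divide[OF d1[OF x] DERIV_add[OF d1[OF x] DERIV_const[of b]] H]
      by (simp add: power2_eq_square)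
    have q': "DERIV (\<lambda>x. F x / (F x + b)) x :> b * F1 x / (F x + b)^2"
      using q by (simp add: algebra_simps)
    have p: "DERIV (\<lambda>x. (F x + b)^2) x :> of_nat 2 * ((F1 x + 0) * (F x + b)^(2 - Suc 0))"
      by (intro DERIV_power DERIV_add d1[OF x] DERIV_const)
    have H2: "(F x + b)^2 \<noteq> 0" using H by simp
    have r: "DERIV (\<lambda>x. b * F1 x / (F x + b)^2) x :>
        (b * F2 x * (F x + b)^2 - b * F1 x * (of_nat 2 * ((F1 x + 0) * (F x + b)^(2 - Suc 0)))) / ((F x + b)^2 * (F x + b)^2)"
      using DERIV_divide[OF DERIV_cmult[OF d2[OF x], of b] p H2] by (simp add: power2_eq_square)
    have r': "(b * F2 x * (F x + b)^2 - b * F1 x * (of_nat 2 * ((F1 x + 0) * (F x + b)^(2 - Suc 0)))) / ((F x + b)^2 * (F x + b)^2)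
         = b * (F2 x * (F x + b) - 2 * (F1 x)^2) / (F x + b)^3"
      by (rule aux2[OF H])
    have "DERIV (\<lambda>x. - (1 - \<sigma>) * (- (F x / (F x + b)) + (1 - x) * (b * F1 x / (F x + b)^2))) x :>
           - (1 - \<sigma>) * (- (b * F1 x / (F x + b)^2) + ((0 - 1) * (b * F1 x / (F x + b)^2) + 
            ((b * F2 x * (F x + b)^2 - b * F1 x * (of_nat 2 * ((F1 x + 0) * (F x + b)^(2 - Suc 0)))) / ((F x + b)^2 * (F x + b)^2)) * (1 - x)))"
      by (intro DERIV_cmult DERIV_add DERIV_minus DERIV_mult q' r DERIV_diff DERIV_const DERIV_ident)
    then show ?thesis unfolding g1_def g2_def r'
      by (elim DERIV_cong; simp add: algebra_simps)
  qed
  show "- (1 - \<sigma>) * g2 x \<le> 0" if x: "x \<in> {0<..<1}" for x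
  proof -
    have H: "F x + b > 0" using nn[OF x] b by linarith
    have "0 \<le> - 2 * (b * F1 x / (F x + b)^2)"
      using dec[OF x] b H by (simp add: divide_nonpos_pos mult_nonneg_nonpos)
    moreover have "0 \<le> (1 - x) * (b * (F2 x * (F x + b) - 2 * (F1 x)^2) / (F x + b)^3)"
      using key[OF x] x b H by (intro mult_nonneg_nonneg divide_nonneg_pos) auto
    ultimately have "g2 x \<ge> 0" unfolding g2_def by linarith
    then show ?thesis using s by (simp add: mult_nonpos_nonneg)
  qed
qed



definition phi :: "nat \<Rightarrow> real \<Rightarrow> real" where
  "phi Q x = exp (-x) * (real Q * Tsum (Suc Q) x - x * Tsum Q x)"

lemma Tsum_coeff: "c * Tsum (Suc n) x - x * Tsum n x = (\<Sum>k<Suc n. (c - real k) * x^k / fact k)"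
proof (induction n)
  case 0 then show ?case by (simp add: Tsum_def)
next
  case (Suc n)
  have "c * Tsum (Suc (Suc n)) x - x * Tsum (Suc n) x
      = (c * Tsum (Suc n) x - x * Tsum n x) + c * x^Suc n / fact (Suc n) - x * x^n / fact n"
    by (simp add: Tsum_Suc algebra_simps)
  also have "x * x^n / fact n = real (Suc n) * x^Suc n / fact (Suc n)"
    by (simp add: field_simps del: of_nat_Suc)
  finally show ?case using Suc by (simp add: algebra_simps add_divide_distrib diff_divide_distrib)
qed

lemma phi_nonneg: "x \<ge> 0 \<Longrightarrow> phi Q x \<ge> 0"
  unfolding phi_def Tsum_coeff by (intro mult_nonneg_nonneg sum_nonneg) auto

lemma DERIV_phi: "DERIV (phi (Suc m)) x :> - (exp (-x) * Tsum (Suc m) x)"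
proof -
  have d: "DERIV (phi (Suc m)) x :> - exp (-x) * (real (Suc m) * Tsum (Suc (Suc m)) x - x * Tsum (Suc m) x)
          + exp (-x) * (real (Suc m) * Tsum (Suc m) x - (1 * Tsum (Suc m) x + x * Tsum m x))"
    unfolding phi_def[abs_def]
    by (rule derivative_eq_intros DERIV_Tsum refl | simp)+
  show ?thesis
    by (rule DERIV_cong[OF d]) (simp add: Tsum_Suc field_simps del: of_nat_Suc)
qed

lemma DERIV_phi1: "DERIV (\<lambda>x. - (exp (-x) * Tsum (Suc m) x)) x :> exp (-x) * x^m / fact m"
proof -
  have d: "DERIV (\<lambda>x. - (exp (-x) * Tsum (Suc m) x)) x :> - (- exp (-x) * Tsum (Suc m) x + exp (-x) * Tsum m x)"
    by (rule derivative_eq_intros DERIV_Tsum refl | simp)+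
  show ?thesis
    by (rule DERIV_cong[OF d]) (simp add: Tsum_Suc field_simps)
qed

lemma eee_f_closed:
  assumes "\<mu> > 0" "Ts > 0" "\<rho> > 0"
  shows "eee_f \<mu> Ts (Suc m) \<rho> = phi (Suc m) (\<mu> * \<rho> * Ts) / (\<mu> * \<rho>)"
proof -
  have x: "\<mu> * \<rho> * Ts > 0" using assms by simp
  have e1: "real (Suc m) + 1 = real (Suc (Suc m))" by simp
  have g: "Gamma (real (Suc m)) = fact m"
    using Gamma_fact[of m, where 'a=real] by (simp add: add.commute)
  show ?thesis
    unfolding eee_f_def e1 upper_Gamma_nat[OF x] g phi_def
    using assms by (simp add: field_simps del: of_nat_Suc)
qed



lemma keyineq:
  fixes \<mu> \<rho> Ts b x P0 P1 P2 :: real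
  assumes "\<mu> > 0" "\<rho> > 0" "Ts > 0" "b \<ge> Ts" "x = \<mu> * \<rho> * Ts"
    "P0 \<ge> 0" "P1 \<le> 0" "P1 \<ge> -1" "P2 \<ge> 0"
  shows "(x*x*P2 - 2*(x*P1 - P0)) / (\<mu>*\<rho>^3) * (P0 / (\<mu>*\<rho>) + b) \<ge> 2 * ((x*P1 - P0) / (\<mu>*\<rho>^2))^2"
proof -
  define N where "N = x*P1 - P0"
  have x: "x > 0" using assms by simp
  have D: "\<mu>^2*\<rho>^4 > 0" using assms by simp
  have lhs: "(x*x*P2 - 2*N) / (\<mu>*\<rho>^3) * (P0 / (\<mu>*\<rho>) + b) = (x*x*P2 - 2*N) * (P0 + \<mu>*\<rho>*b) / (\<mu>^2*\<rho>^4)"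
    using assms by (simp add: field_simps power2_eq_square power3_eq_cube power4_eq_xxxx)
  have rhs: "2 * (N / (\<mu>*\<rho>^2))^2 = 2*N^2 / (\<mu>^2*\<rho>^4)"
    by (simp add: power_divide power_mult_distrib power2_eq_square power4_eq_xxxx)
  have id: "(x*x*P2 - 2*N) * (P0 + \<mu>*\<rho>*b) - 2*N^2
      = x*x*P2*(P0 + \<mu>*\<rho>*b) + 2*(P0 - x*P1)*(\<mu>*\<rho>)*(Ts*P1 + b)"
    unfolding N_def assms(5) by (simp add: algebra_simps power2_eq_square)
  have "Ts * P1 \<ge> - Ts" using mult_left_mono[of "-1" P1 Ts] assms by simp
  then have c1: "Ts*P1 + b \<ge> 0" using assms by linarith
  have "x*P1 \<le> 0" using mult_nonneg_nonpos[of x P1] x assms by simp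
  then have c2: "P0 - x*P1 \<ge> 0" using assms by linarith
  have "0 \<le> x*x*P2*(P0 + \<mu>*\<rho>*b) + 2*(P0 - x*P1)*(\<mu>*\<rho>)*(Ts*P1 + b)"
  proof -
    have a: "0 \<le> x*x*P2*(P0 + \<mu>*\<rho>*b)" using assms x by simp
    have m: "0 \<le> \<mu>*\<rho>" using assms by simp
    have "0 \<le> (P0 - x*P1)*(\<mu>*\<rho>)*(Ts*P1 + b)"
      using c1 c2 m by (metis mult_nonneg_nonneg)
    then show ?thesis using a by linarith
  qed
  then have "2*N^2 \<le> (x*x*P2 - 2*N) * (P0 + \<mu>*\<rho>*b)" using id by linarith
  then have "2*N^2 / (\<mu>^2*\<rho>^4) \<le> (x*x*P2 - 2*N) * (P0 + \<mu>*\<rho>*b) / (\<mu>^2*\<rho>^4)"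
    using D by (simp add: divide_right_mono)
  then show ?thesis unfolding N_def[symmetric] lhs rhs .
qed

theorem mainTheorem7:
  fixes \<mu> Ts Tw :: real and Qw :: nat
  assumes "\<mu> > 0" and "Ts > 0" and "Tw > 0" and "Qw \<ge> 1"
  defines "f \<equiv> eee_f \<mu> Ts Qw" and "b \<equiv> Ts + Tw"
  shows "(\<forall>\<rho>\<in>{0<..<1}. deriv (deriv f) \<rho> * (f \<rho> + b) \<ge> 2 * (deriv f \<rho>)\<^sup>2)
       \<and> (\<forall>\<sigma>. 0 \<le> \<sigma> \<and> \<sigma> < 1 \<longrightarrow> concave_on {0<..<1} (eee_E \<mu> Ts Tw Qw \<sigma>))"
proof -
  obtain m where Q: "Qw = Suc m" using assms(4) by (cases Qw) auto
  define X where "X \<rho> = \<mu> * \<rho> * Ts" for \<rho>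
  define P0 where "P0 \<rho> = phi (Suc m) (X \<rho>)" for \<rho>
  define P1 where "P1 \<rho> = - (exp (- X \<rho>) * Tsum (Suc m) (X \<rho>))" for \<rho>
  define P2 where "P2 \<rho> = exp (- X \<rho>) * X \<rho> ^ m / fact m" for \<rho>
  define fc where "fc \<rho> = P0 \<rho> / (\<mu> * \<rho>)" for \<rho>
  define f1 where "f1 \<rho> = (X \<rho> * P1 \<rho> - P0 \<rho>) / (\<mu> * \<rho>^2)" for \<rho>
  define f2 where "f2 \<rho> = (X \<rho> * X \<rho> * P2 \<rho> - 2 * (X \<rho> * P1 \<rho> - P0 \<rho>)) / (\<mu> * \<rho>^3)" for \<rho>
  have mu: "\<mu> > 0" and Ts: "Ts > 0" using assms by auto
  have feq: "f \<rho> = fc \<rho>" if "\<rho> \<in> {0<..}" for \<rho>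
    using that unfolding f_def Q fc_def P0_def X_def by (simp add: eee_f_closed[OF mu Ts])
  have dX: "DERIV X \<rho> :> \<mu> * Ts" for \<rho>
    unfolding X_def[abs_def] by (rule derivative_eq_intros refl | simp)+
  have dP0: "DERIV P0 \<rho> :> P1 \<rho> * (\<mu> * Ts)" for \<rho>
    unfolding P0_def[abs_def] P1_def using DERIV_chain2[OF DERIV_phi dX] .
  have dP1: "DERIV P1 \<rho> :> P2 \<rho> * (\<mu> * Ts)" for \<rho>
    unfolding P1_def[abs_def] P2_def using DERIV_chain2[OF DERIV_phi1[of m] dX] .
  have dfc: "DERIV fc \<rho> :> f1 \<rho>" if "\<rho> > 0" for \<rho>
  proof -
    have nz: "\<mu> * \<rho> \<noteq> 0" using that mu by simp
    have d: "DERIV fc \<rho> :> (P1 \<rho> * (\<mu> * Ts) * (\<mu> * \<rho>) - P0 \<rho> * (\<mu> * 1)) / ((\<mu> * \<rho>) * (\<mu> * \<rho>))"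
      unfolding fc_def[abs_def]
      by (intro DERIV_divide dP0 DERIV_cmult DERIV_ident nz)
    show ?thesis
      by (rule DERIV_cong[OF d]) (use nz in \<open>simp add: f1_def X_def field_simps power2_eq_square\<close>)
  qed
  have df1: "DERIV f1 \<rho> :> f2 \<rho>" if "\<rho> > 0" for \<rho>
  proof -
    have nz: "\<mu> * \<rho>^2 \<noteq> 0" using that mu by simp
    have d: "DERIV f1 \<rho> :> ((\<mu> * Ts * P1 \<rho> + P2 \<rho> * (\<mu> * Ts) * X \<rho> - P1 \<rho> * (\<mu> * Ts)) * (\<mu> * \<rho>^2)
               - (X \<rho> * P1 \<rho> - P0 \<rho>) * (\<mu> * (of_nat 2 * (1 * \<rho> ^ (2 - Suc 0))))) / ((\<mu> * \<rho>^2) * (\<mu> * \<rho>^2))"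
      unfolding f1_def[abs_def]
      by (intro DERIV_divide DERIV_diff DERIV_mult dX dP1 dP0 DERIV_cmult DERIV_power DERIV_ident nz)
    show ?thesis
      by (rule DERIV_cong[OF d]) (use nz that mu in \<open>simp add: f2_def X_def field_simps power2_eq_square power3_eq_cube\<close>)
  qed
  have Df: "DERIV f \<rho> :> f1 \<rho>" if "\<rho> > 0" for \<rho>
    by (rule has_field_derivative_transform_within_open[OF dfc[OF that], of "{0<..}"])
       (use that feq in auto)
  have derf: "deriv f \<rho> = f1 \<rho>" if "\<rho> > 0" for \<rho>
    using Df[OF that] by (rule DERIV_imp_deriv)
  have Df1: "DERIV (deriv f) \<rho> :> f2 \<rho>" if "\<rho> > 0" for \<rho>
    by (rule has_field_derivative_transform_within_open[OF df1[OF that], of "{0<..}"])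
       (use that derf in auto)
  have derf2: "deriv (deriv f) \<rho> = f2 \<rho>" if "\<rho> > 0" for \<rho>
    using Df1[OF that] by (rule DERIV_imp_deriv)
  have props: "P0 \<rho> \<ge> 0 \<and> P1 \<rho> \<le> 0 \<and> P1 \<rho> \<ge> -1 \<and> P2 \<rho> \<ge> 0" if "\<rho> > 0" for \<rho>
  proof -
    have x: "X \<rho> > 0" using that mu Ts by (simp add: X_def)
    have t: "Tsum (Suc m) (X \<rho>) \<le> exp (X \<rho>)" "Tsum (Suc m) (X \<rho>) \<ge> 0"
      using x Tsum_le_exp Tsum_nonneg by auto
    have "exp (- X \<rho>) * Tsum (Suc m) (X \<rho>) \<le> exp (- X \<rho>) * exp (X \<rho>)"
      using t by (intro mult_left_mono) auto
    then have "exp (- X \<rho>) * Tsum (Suc m) (X \<rho>) \<le> 1" by (simp add: exp_minus)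
    then show ?thesis using x t
      by (auto simp: P0_def P1_def P2_def phi_nonneg)
  qed
  have key: "f2 \<rho> * (fc \<rho> + b) \<ge> 2 * (f1 \<rho>)^2" if "\<rho> > 0" for \<rho>
    using keyineq[OF mu that Ts _ _ , of b "X \<rho>" "P0 \<rho>" "P1 \<rho>" "P2 \<rho>"] props[OF that] assms(3)
    unfolding f2_def fc_def f1_def b_def X_def by auto
  have part1: "\<forall>\<rho>\<in>{0<..<1}. deriv (deriv f) \<rho> * (f \<rho> + b) \<ge> 2 * (deriv f \<rho>)\<^sup>2"
    using key derf derf2 feq by auto
  have part2: "concave_on {0<..<1} (eee_E \<mu> Ts Tw Qw \<sigma>)" if s: "0 \<le> \<sigma>" "\<sigma> < 1" for \<sigma>
  proof -
    have "concave_on {0<..<1} (\<lambda>x. 1 - (1 - \<sigma>) * (1 - x) * (f x / (f x + b)))"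
    proof (rule concave_aux[of b \<sigma> f f1 f2])
      show "b > 0" using assms by (simp add: b_def)
      show "\<sigma> < 1" by fact
      show "DERIV f x :> f1 x" if "x \<in> {0<..<1}" for x using that Df by auto
      show "DERIV f1 x :> f2 x" if "x \<in> {0<..<1}" for x using that df1 by auto
      show "f x \<ge> 0" if "x \<in> {0<..<1}" for x
        using that props[of x] feq[of x] mu by (auto simp: fc_def)
      show "f1 x \<le> 0" if "x \<in> {0<..<1}" for x
      proof -
        have "x > 0" using that by auto
        then have "X x * P1 x - P0 x \<le> 0" using props[of x] mu Ts
          by (smt (verit) X_def mult_pos_pos mult_nonneg_nonpos)
        then show ?thesis using \<open>x > 0\<close> mu by (simp add: f1_def divide_nonpos_pos)
      qed
      show "f2 x * (f x + b) \<ge> 2 * (f1 x)^2" if "x \<in> {0<..<1}" for x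
        using that key feq by auto
    qed
    moreover have "eee_E \<mu> Ts Tw Qw \<sigma> = (\<lambda>x. 1 - (1 - \<sigma>) * (1 - x) * (f x / (f x + b)))"
      by (simp add: fun_eq_iff eee_E_def f_def b_def add.assoc)
    ultimately show ?thesis by simp
  qed
  show ?thesis using part1 part2 by blast
qed

end
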